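(* Let $\mathcal D=(X,\mathcal P,\mathcal B)$ be a resolvable divisible design $RGD(r,\lambda,m)$ with $r=\lambda m$, and suppose that any two blocks from different parallel classes contain exactly $\lambda$ common points. Then the incidence graph $\mathrm{Inc}(\mathcal D)$ is a distance-regular bipartite antipodal cover of $K_{r,r}$ with diameter $4$ and antipodal blocks of size $m$.
   Context: A divisible design $GD(k,\lambda,n,kn)$ is a triple $(X,\mathcal P,\mathcal B)$ where $X$ is a set of $kn$ points, $\mathcal P$ is a partition of $X$ into classes of size $n$, and $\mathcal B$ is a collection of $k$-subsets of $X$ (blocks) such that each block meets every class in exactly one point and any two points from different classes are contained in exactly $\lambda$ blocks. It is resolvable, denoted $RGD(k,\lambda,n)$, if its set of blocks is partitioned into parallel classes, i.e. subsets of $\mathcal B$ each of which is a partition of $X$ (this partition is fixed). The incidence graph $\mathrm{Inc}(\mathcal D)$ has vertex set $X\cup\mathcal B$, a point $x$ being adjacent to a block $B$ iff $x\in B$. A graph is antipodal (of diameter $d$) if being at distance $0$ or $d$ is an equivalence relation; its classes are antipodal blocks. The graph is a cover of the quotient graph $\Sigma$ on the antipodal blocks (distinct blocks adjacent iff joined by an edge) if each vertex of a block $B$ has exactly one neighbour in each block adjacent to $B$. *)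

theory Defs
  imports Main "HOL-Library.Disjoint_Sets"
begin

inductive walk :: "'v set \<Rightarrow> ('v \<Rightarrow> 'v \<Rightarrow> bool) \<Rightarrow> 'v \<Rightarrow> 'v \<Rightarrow> nat \<Rightarrow> bool"
  for V E where
  walk0: "u \<in> V \<Longrightarrow> walk V E u u 0"
| walkS: "u \<in> V \<Longrightarrow> E u v \<Longrightarrow> walk V E v w n \<Longrightarrow> walk V E u w (Suc n)"

definition gdist :: "'v set \<Rightarrow> ('v \<Rightarrow> 'v \<Rightarrow> bool) \<Rightarrow> 'v \<Rightarrow> 'v \<Rightarrow> nat" where
  "gdist V E u v = (LEAST n. walk V E u v n)"

definition gconnected :: "'v set \<Rightarrow> ('v \<Rightarrow> 'v \<Rightarrow> bool) \<Rightarrow> bool" where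
  "gconnected V E \<longleftrightarrow> (\<forall>u\<in>V. \<forall>v\<in>V. \<exists>n. walk V E u v n)"

definition has_diameter :: "'v set \<Rightarrow> ('v \<Rightarrow> 'v \<Rightarrow> bool) \<Rightarrow> nat \<Rightarrow> bool" where
  "has_diameter V E d \<longleftrightarrow> gconnected V E \<and>
     (\<forall>u\<in>V. \<forall>v\<in>V. gdist V E u v \<le> d) \<and> (\<exists>u\<in>V. \<exists>v\<in>V. gdist V E u v = d)"

definition distance_regular :: "'v set \<Rightarrow> ('v \<Rightarrow> 'v \<Rightarrow> bool) \<Rightarrow> bool" where
  "distance_regular V E \<longleftrightarrow> finite V \<and> gconnected V E \<and>
     (\<exists>b c :: nat \<Rightarrow> nat. \<forall>u\<in>V. \<forall>v\<in>V.
        card {w\<in>V. E v w \<and> gdist V E u w + 1 = gdist V E u v} = c (gdist V E u v) \<and>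
        card {w\<in>V. E v w \<and> gdist V E u w = gdist V E u v + 1} = b (gdist V E u v))"

definition bipartite :: "'v set \<Rightarrow> ('v \<Rightarrow> 'v \<Rightarrow> bool) \<Rightarrow> bool" where
  "bipartite V E \<longleftrightarrow> (\<exists>V1 V2. V1 \<inter> V2 = {} \<and> V1 \<union> V2 = V \<and>
     (\<forall>u\<in>V. \<forall>v\<in>V. E u v \<longrightarrow> (u \<in> V1 \<and> v \<in> V2) \<or> (u \<in> V2 \<and> v \<in> V1)))"

definition antirel :: "'v set \<Rightarrow> ('v \<Rightarrow> 'v \<Rightarrow> bool) \<Rightarrow> nat \<Rightarrow> ('v \<times> 'v) set" where
  "antirel V E d = {(u, v). u \<in> V \<and> v \<in> V \<and> (gdist V E u v = 0 \<or> gdist V E u v = d)}"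

definition antipodal :: "'v set \<Rightarrow> ('v \<Rightarrow> 'v \<Rightarrow> bool) \<Rightarrow> nat \<Rightarrow> bool" where
  "antipodal V E d \<longleftrightarrow> has_diameter V E d \<and> equiv V (antirel V E d)"

definition antipodal_blocks :: "'v set \<Rightarrow> ('v \<Rightarrow> 'v \<Rightarrow> bool) \<Rightarrow> nat \<Rightarrow> 'v set set" where
  "antipodal_blocks V E d = V // antirel V E d"

definition qadj :: "('v \<Rightarrow> 'v \<Rightarrow> bool) \<Rightarrow> 'v set \<Rightarrow> 'v set \<Rightarrow> bool" where
  "qadj E A A' \<longleftrightarrow> A \<noteq> A' \<and> (\<exists>x\<in>A. \<exists>y\<in>A'. E x y)"

definition is_cover_of_quotient :: "'v set \<Rightarrow> ('v \<Rightarrow> 'v \<Rightarrow> bool) \<Rightarrow> nat \<Rightarrow> bool" where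
  "is_cover_of_quotient V E d \<longleftrightarrow>
     (\<forall>A\<in>antipodal_blocks V E d. \<forall>A'\<in>antipodal_blocks V E d.
        qadj E A A' \<longrightarrow> (\<forall>x\<in>A. \<exists>!y. y \<in> A' \<and> E x y))"

definition quotient_is_Krr :: "'v set \<Rightarrow> ('v \<Rightarrow> 'v \<Rightarrow> bool) \<Rightarrow> nat \<Rightarrow> nat \<Rightarrow> bool" where
  "quotient_is_Krr V E d r \<longleftrightarrow> (\<exists>S1 S2. S1 \<inter> S2 = {} \<and> S1 \<union> S2 = antipodal_blocks V E d \<and>
     card S1 = r \<and> card S2 = r \<and>
     (\<forall>A\<in>antipodal_blocks V E d. \<forall>A'\<in>antipodal_blocks V E d.
        qadj E A A' \<longleftrightarrow> (A \<in> S1 \<and> A' \<in> S2) \<or> (A \<in> S2 \<and> A' \<in> S1)))"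

definition antipodal_cover_Krr :: "'v set \<Rightarrow> ('v \<Rightarrow> 'v \<Rightarrow> bool) \<Rightarrow> nat \<Rightarrow> nat \<Rightarrow> nat \<Rightarrow> bool" where
  "antipodal_cover_Krr V E r d m \<longleftrightarrow> antipodal V E d \<and> is_cover_of_quotient V E d \<and>
     quotient_is_Krr V E d r \<and> (\<forall>A\<in>antipodal_blocks V E d. card A = m)"

text \<open>Blocks are indexed by a set Bs (so repeated blocks are allowed); blk b is the
  point set of block b.  GD(k, lam, n, kn).\<close>

definition GD :: "nat \<Rightarrow> nat \<Rightarrow> nat \<Rightarrow> 'a set \<Rightarrow> 'a set set \<Rightarrow> 'b set \<Rightarrow> ('b \<Rightarrow> 'a set) \<Rightarrow> bool" where
  "GD k lam n X P Bs blk \<longleftrightarrow>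
     finite X \<and> card X = k * n \<and> partition_on X P \<and> (\<forall>C\<in>P. card C = n) \<and>
     finite Bs \<and>
     (\<forall>b\<in>Bs. blk b \<subseteq> X \<and> card (blk b) = k \<and> (\<forall>C\<in>P. card (blk b \<inter> C) = 1)) \<and>
     (\<forall>x\<in>X. \<forall>y\<in>X. (\<forall>C\<in>P. \<not> (x \<in> C \<and> y \<in> C)) \<longrightarrow>
        card {b\<in>Bs. x \<in> blk b \<and> y \<in> blk b} = lam)"

definition RGD :: "nat \<Rightarrow> nat \<Rightarrow> nat \<Rightarrow> 'a set \<Rightarrow> 'a set set \<Rightarrow> 'b set \<Rightarrow> ('b \<Rightarrow> 'a set)
    \<Rightarrow> 'b set set \<Rightarrow> bool" where
  "RGD r lam m X P Bs blk PC \<longleftrightarrow> GD r lam m X P Bs blk \<and> partition_on Bs PC \<and>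
     (\<forall>C\<in>PC. inj_on blk C \<and> partition_on X (blk ` C))"

definition inc_V :: "'a set \<Rightarrow> 'b set \<Rightarrow> ('a + 'b) set" where
  "inc_V X Bs = Inl ` X \<union> Inr ` Bs"

fun inc_E :: "('b \<Rightarrow> 'a set) \<Rightarrow> ('a + 'b) \<Rightarrow> ('a + 'b) \<Rightarrow> bool" where
  "inc_E blk (Inl x) (Inr b) = (x \<in> blk b)"
| "inc_E blk (Inr b) (Inl x) = (x \<in> blk b)"
| "inc_E blk _ _ = False"

end

theory Submission
  imports Defs
begin

lemma walk_V: "walk V E u v n \<Longrightarrow> u \<in> V \<and> v \<in> V"
  by (induction rule: walk.induct) auto

lemma walk_0: "walk V E u v 0 \<Longrightarrow> u = v"
  by (erule walk.cases) auto

lemma walk_1: "walk V E u v (Suc 0) \<Longrightarrow> E u v"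
  by (erule walk.cases) (auto dest: walk_0)

lemma walk_2: "walk V E u v (Suc (Suc 0)) \<Longrightarrow> \<exists>w\<in>V. E u w \<and> E w v"
  by (erule walk.cases) (auto dest: walk_1 walk_V)

lemma walk_snoc: "walk V E u v n \<Longrightarrow> E v w \<Longrightarrow> w \<in> V \<Longrightarrow> walk V E u w (Suc n)"
  by (induction rule: walk.induct) (auto intro: walk.intros)

lemma walk_rev: assumes "\<And>a b. E a b \<Longrightarrow> E b a" shows "walk V E u v n \<Longrightarrow> walk V E v u n"
  by (induction rule: walk.induct) (auto intro: walk.intros walk_snoc assms)

lemma gdist_eqI: "walk V E u v d \<Longrightarrow> (\<And>n. n < d \<Longrightarrow> \<not> walk V E u v n) \<Longrightarrow> gdist V E u v = d"
  unfolding gdist_def by (rule Least_equality) (auto simp: not_less[symmetric])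

lemma inc_E_isl: "inc_E blk u v \<Longrightarrow> isl u \<noteq> isl v"
  by (cases u; cases v) auto

lemma inc_E_sym: "inc_E blk u v \<Longrightarrow> inc_E blk v u"
  by (cases u; cases v) auto

lemma walk_parity: "walk V (inc_E blk) u v n \<Longrightarrow> (isl u = isl v) = even n"
  by (induction rule: walk.induct) (auto dest: inc_E_isl)

lemma walk_edge: "u \<in> V \<Longrightarrow> v \<in> V \<Longrightarrow> E u v \<Longrightarrow> walk V E u v (Suc 0)"
  by (auto intro: walk.intros)

locale rgdl =
  fixes X :: "'a set" and P :: "'a set set" and Bs :: "'b set" and blk :: "'b \<Rightarrow> 'a set"
    and PC :: "'b set set" and r lam m :: nat
  assumes rgd: "RGD r lam m X P Bs blk PC"
    and rl: "r = lam * m"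
    and lam1: "lam \<ge> 1" and m2: "m \<ge> 2"
    and inter: "\<forall>C1\<in>PC. \<forall>C2\<in>PC. C1 \<noteq> C2 \<longrightarrow>
           (\<forall>b1\<in>C1. \<forall>b2\<in>C2. card (blk b1 \<inter> blk b2) = lam)"
begin

lemma finX: "finite X" and cardX: "card X = r * m" and partP: "partition_on X P"
  and cardP: "\<And>C. C \<in> P \<Longrightarrow> card C = m" and finBs: "finite Bs"
  and blkX: "\<And>b. b \<in> Bs \<Longrightarrow> blk b \<subseteq> X"
  and cardblk: "\<And>b. b \<in> Bs \<Longrightarrow> card (blk b) = r"
  and meet1: "\<And>b C. b \<in> Bs \<Longrightarrow> C \<in> P \<Longrightarrow> card (blk b \<inter> C) = 1"
  and lamc: "\<And>x y. x \<in> X \<Longrightarrow> y \<in> X \<Longrightarrow> (\<forall>C\<in>P. \<not> (x \<in> C \<and> y \<in> C)) \<Longrightarrow>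
        card {b\<in>Bs. x \<in> blk b \<and> y \<in> blk b} = lam"
  and partPC: "partition_on Bs PC"
  and pcinj: "\<And>C. C \<in> PC \<Longrightarrow> inj_on blk C"
  and pcpart: "\<And>C. C \<in> PC \<Longrightarrow> partition_on X (blk ` C)"
  using rgd unfolding RGD_def GD_def by auto

lemma r2: "r \<ge> 2" using rl lam1 m2
  by (metis dual_order.trans mult_le_mono1 mult_1)

definition cls :: "'a \<Rightarrow> 'a set" where "cls x = (THE C. C \<in> P \<and> x \<in> C)"
definition pc :: "'b \<Rightarrow> 'b set" where "pc b = (THE C. C \<in> PC \<and> b \<in> C)"

lemma part_unique: "partition_on A Q \<Longrightarrow> C \<in> Q \<Longrightarrow> D \<in> Q \<Longrightarrow> x \<in> C \<Longrightarrow> x \<in> D \<Longrightarrow> C = D"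
  unfolding partition_on_def disjoint_def by blast

lemma cls_eq: assumes "C \<in> P" "x \<in> C" shows "cls x = C"
  unfolding cls_def
proof (rule the_equality)
  show "C \<in> P \<and> x \<in> C" using assms by blast
  fix D assume "D \<in> P \<and> x \<in> D"
  then show "D = C" using part_unique[OF partP, of D C x] assms by blast
qed

lemma cls: assumes "x \<in> X" shows "cls x \<in> P" "x \<in> cls x"
proof -
  obtain C where C: "C \<in> P" "x \<in> C" using assms partP unfolding partition_on_def by blast
  have "cls x = C" using cls_eq[OF C] .
  then show "cls x \<in> P" "x \<in> cls x" using C by auto
qed

lemma P_sub: "C \<in> P \<Longrightarrow> C \<subseteq> X" using partP unfolding partition_on_def by blast
lemma P_ne: "C \<in> P \<Longrightarrow> C \<noteq> {}" using partP unfolding partition_on_def by blast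
lemma PC_sub: "C \<in> PC \<Longrightarrow> C \<subseteq> Bs" using partPC unfolding partition_on_def by blast
lemma PC_ne: "C \<in> PC \<Longrightarrow> C \<noteq> {}" using partPC unfolding partition_on_def by blast

lemma pc_eq: assumes "C \<in> PC" "b \<in> C" shows "pc b = C"
  unfolding pc_def
proof (rule the_equality)
  show "C \<in> PC \<and> b \<in> C" using assms by blast
  fix D assume "D \<in> PC \<and> b \<in> D"
  then show "D = C" using part_unique[OF partPC, of D C b] assms by blast
qed

lemma pc: assumes "b \<in> Bs" shows "pc b \<in> PC" "b \<in> pc b"
proof -
  obtain C where C: "C \<in> PC" "b \<in> C" using assms partPC unfolding partition_on_def by blast
  have "pc b = C" using pc_eq[OF C] .
  then show "pc b \<in> PC" "b \<in> pc b" using C by auto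
qed

lemma cls_iff: assumes "x \<in> X" "y \<in> X" shows "cls x = cls y \<longleftrightarrow> y \<in> cls x"
proof
  assume "cls x = cls y" then show "y \<in> cls x" using cls(2)[OF assms(2)] by simp
next
  assume "y \<in> cls x" then show "cls x = cls y" using cls_eq[OF cls(1)[OF assms(1)]] by simp
qed

lemma pc_iff: assumes "a \<in> Bs" "b \<in> Bs" shows "pc a = pc b \<longleftrightarrow> b \<in> pc a"
proof
  assume "pc a = pc b" then show "b \<in> pc a" using pc(2)[OF assms(2)] by simp
next
  assume "b \<in> pc a" then show "pc a = pc b" using pc_eq[OF pc(1)[OF assms(1)]] by simp
qed

lemma blk_nsame: assumes "b \<in> Bs" "x \<in> blk b" "y \<in> blk b" "x \<noteq> y"
  shows "cls x \<noteq> cls y"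
proof
  assume e: "cls x = cls y"
  have xX: "x \<in> X" "y \<in> X" using assms blkX by auto
  have "{x, y} \<subseteq> blk b \<inter> cls x" using assms e cls[OF xX(1)] cls[OF xX(2)] by auto
  moreover have "finite (blk b \<inter> cls x)" using finX blkX assms(1) by (meson finite_Int finite_subset)
  ultimately have "card {x,y} \<le> card (blk b \<inter> cls x)" by (rule card_mono[rotated])
  then show False using meet1[OF assms(1) cls(1)[OF xX(1)]] assms(4) by simp
qed

lemma disj: assumes "C \<in> PC" "a \<in> C" "b \<in> C" "a \<noteq> b" shows "blk a \<inter> blk b = {}"
proof -
  have "blk a \<noteq> blk b" using pcinj[OF assms(1)] assms unfolding inj_on_def by blast
  then show ?thesis using pcpart[OF assms(1)] assms(2,3) unfolding partition_on_def disjoint_def by blast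
qed

lemma blk_ex: assumes "C \<in> PC" "x \<in> X" shows "\<exists>b\<in>C. x \<in> blk b"
  using pcpart[OF assms(1)] assms(2) unfolding partition_on_def by blast

lemma blk_uniq: "C \<in> PC \<Longrightarrow> a \<in> C \<Longrightarrow> b \<in> C \<Longrightarrow> x \<in> blk a \<Longrightarrow> x \<in> blk b \<Longrightarrow> a = b"
  using disj by blast

lemma pt_ex1: assumes "b \<in> Bs" "C \<in> P" shows "\<exists>!y. y \<in> blk b \<and> y \<in> C"
proof -
  obtain y where y: "blk b \<inter> C = {y}" using meet1[OF assms] card_1_singletonE by blast
  show ?thesis by (rule ex1I[of _ y]) (use y in blast)+
qed

lemma common_blk: assumes "x \<in> X" "y \<in> X" "cls x \<noteq> cls y"
  shows "\<exists>b\<in>Bs. x \<in> blk b \<and> y \<in> blk b"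
proof -
  have "\<forall>C\<in>P. \<not> (x \<in> C \<and> y \<in> C)" using assms cls_eq by metis
  then have "card {b\<in>Bs. x \<in> blk b \<and> y \<in> blk b} = lam" using lamc assms by blast
  then have "card {b\<in>Bs. x \<in> blk b \<and> y \<in> blk b} \<noteq> 0" using lam1 by simp
  then have "{b\<in>Bs. x \<in> blk b \<and> y \<in> blk b} \<noteq> {}" by (metis card.empty)
  then show ?thesis by blast
qed

lemma interlam: assumes "a \<in> Bs" "b \<in> Bs" "pc a \<noteq> pc b" shows "card (blk a \<inter> blk b) = lam"
  using inter pc[OF assms(1)] pc[OF assms(2)] assms(3) by blast

lemma common_pt: assumes "a \<in> Bs" "b \<in> Bs" "pc a \<noteq> pc b" shows "\<exists>y. y \<in> blk a \<and> y \<in> blk b"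
proof -
  have "blk a \<inter> blk b \<noteq> {}" using interlam[OF assms] lam1 by auto
  then show ?thesis by blast
qed

lemma cardPn: "card P = r"
proof -
  have "card X = sum card P" using partP card_Union_disjoint[of P] finX
    unfolding partition_on_def by (metis Union_upper finite_subset)
  also have "\<dots> = card P * m" using cardP by simp
  finally have "card P * m = r * m" using cardX by linarith
  moreover have "m \<noteq> 0" using m2 by simp
  ultimately show ?thesis using mult_right_cancel by blast
qed

lemma cardPC: assumes "C \<in> PC" shows "card C = m"
proof -
  have fC: "finite C" using PC_sub[OF assms] finBs finite_subset by blast
  have "card X = sum card (blk ` C)" using pcpart[OF assms] card_Union_disjoint[of "blk ` C"] finX
    unfolding partition_on_def by (metis Union_upper finite_subset)
  also have "\<dots> = sum (card \<circ> blk) C" using sum.reindex[OF pcinj[OF assms]] by simp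
  also have "\<dots> = card C * r" using cardblk PC_sub[OF assms] by (simp add: subset_iff)
  finally have "card X = card C * r" .
  then have "card C * r = m * r" using cardX by (metis mult.commute)
  moreover have "r \<noteq> 0" using r2 by simp
  ultimately show ?thesis using mult_right_cancel by blast
qed

lemma Nx_bij: assumes "x \<in> X" shows "bij_betw pc {b\<in>Bs. x \<in> blk b} PC"
  unfolding bij_betw_def
proof
  show "inj_on pc {b\<in>Bs. x \<in> blk b}"
    unfolding inj_on_def using pc blk_uniq by (metis (mono_tags, lifting) mem_Collect_eq)
  show "pc ` {b\<in>Bs. x \<in> blk b} = PC"
  proof
    show "pc ` {b\<in>Bs. x \<in> blk b} \<subseteq> PC" using pc by auto
    show "PC \<subseteq> pc ` {b\<in>Bs. x \<in> blk b}"
    proof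
      fix C assume C: "C \<in> PC"
      obtain b where "b \<in> C" "x \<in> blk b" using blk_ex[OF C assms] by blast
      then show "C \<in> pc ` {b\<in>Bs. x \<in> blk b}" using pc_eq[OF C] PC_sub[OF C] by blast
    qed
  qed
qed

lemma cardPCn: "card PC = r"
proof -
  obtain C0 where C0: "C0 \<in> P" using cardPn r2 by fastforce
  obtain x where x: "x \<in> C0" using P_ne[OF C0] by blast
  have xX: "x \<in> X" using x P_sub[OF C0] by blast
  define Nx where "Nx = {b\<in>Bs. x \<in> blk b}"
  have cNx: "card Nx = card PC" unfolding Nx_def using Nx_bij[OF xX] bij_betw_same_card by blast
  have fNx: "finite Nx" unfolding Nx_def using finBs by simp
  define T where "T = Sigma (X - cls x) (\<lambda>y. {b\<in>Nx. y \<in> blk b})"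
  define T2 where "T2 = Sigma Nx (\<lambda>b. blk b - cls x)"
  have "T2 = prod.swap ` T" unfolding T_def T2_def Nx_def by (auto intro: blkX[THEN subsetD])
  then have cT: "card T2 = card T" by (simp add: card_image swap_inj_on)
  have "card T = (\<Sum>y\<in>X - cls x. card {b\<in>Nx. y \<in> blk b})"
    unfolding T_def using finX fNx by simp
  also have "\<dots> = (\<Sum>y\<in>X - cls x. lam)"
  proof (rule sum.cong)
    fix y assume y: "y \<in> X - cls x"
    have "\<forall>C\<in>P. \<not> (x \<in> C \<and> y \<in> C)" using y cls_eq by blast
    then have "card {b\<in>Bs. x \<in> blk b \<and> y \<in> blk b} = lam" using lamc xX y by blast
    moreover have "{b\<in>Nx. y \<in> blk b} = {b\<in>Bs. x \<in> blk b \<and> y \<in> blk b}" unfolding Nx_def by auto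
    ultimately show "card {b\<in>Nx. y \<in> blk b} = lam" by simp
  qed simp
  also have "\<dots> = (r * m - m) * lam"
  proof -
    have "card (X - cls x) = card X - card (cls x)"
      using cls[OF xX] P_sub finX by (meson card_Diff_subset finite_subset)
    then show ?thesis using cardX cardP cls[OF xX] by simp
  qed
  finally have c0: "card T = (r * m - m) * lam" .
  have "r * m - m = (r - 1) * m" by (simp add: diff_mult_distrib)
  then have c1: "card T = (r - 1) * r" using c0 rl by (simp add: mult.assoc mult.commute)
  have "card T2 = (\<Sum>b\<in>Nx. card (blk b - cls x))"
    unfolding T2_def using fNx by (intro card_SigmaI) (auto intro!: finite_Diff finite_subset[OF blkX finX] simp: Nx_def)
  also have "\<dots> = (\<Sum>b\<in>Nx. r - 1)"
  proof (rule sum.cong)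
    fix b assume b: "b \<in> Nx"
    then have bB: "b \<in> Bs" unfolding Nx_def by simp
    have "card (blk b - cls x) = card (blk b) - card (blk b \<inter> cls x)"
      by (rule card_Diff_subset_Int) (meson bB blkX finX finite_Int finite_subset)
    then show "card (blk b - cls x) = r - 1" using cardblk[OF bB] meet1[OF bB cls(1)[OF xX]] by simp
  qed simp
  finally have c2: "card T2 = card PC * (r - 1)" using cNx by simp
  then have "card PC * (r - 1) = r * (r - 1)" using c1 cT by (metis mult.commute)
  moreover have "r - 1 \<noteq> 0" using r2 by simp
  ultimately show ?thesis using mult_right_cancel by blast
qed

lemma cardNx: "x \<in> X \<Longrightarrow> card {b\<in>Bs. x \<in> blk b} = r"
  using Nx_bij bij_betw_same_card cardPCn by metis

abbreviation "V \<equiv> inc_V X Bs"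
abbreviation "E \<equiv> inc_E blk"

lemma V_simps[simp]: "Inl x \<in> V \<longleftrightarrow> x \<in> X" "Inr b \<in> V \<longleftrightarrow> b \<in> Bs"
  unfolding inc_V_def by auto

definition D :: "('a + 'b) \<Rightarrow> ('a + 'b) \<Rightarrow> nat" where
  "D u v = (case u of Inl x \<Rightarrow> (case v of Inl y \<Rightarrow> if x = y then 0 else if cls x = cls y then 4 else 2
                                        | Inr b \<Rightarrow> if x \<in> blk b then 1 else 3)
                    | Inr a \<Rightarrow> (case v of Inl y \<Rightarrow> if y \<in> blk a then 1 else 3
                                        | Inr b \<Rightarrow> if a = b then 0 else if pc a = pc b then 4 else 2))"

lemma D_simps[simp]:
  "D (Inl x) (Inl y) = (if x = y then 0 else if cls x = cls y then 4 else 2)"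
  "D (Inl x) (Inr b) = (if x \<in> blk b then 1 else 3)"
  "D (Inr b) (Inl x) = (if x \<in> blk b then 1 else 3)"
  "D (Inr a) (Inr b) = (if a = b then 0 else if pc a = pc b then 4 else 2)"
  unfolding D_def by auto

lemma D_le4: "D u v \<le> 4" by (cases u; cases v) auto

lemma two_PC: assumes "C0 \<in> PC" obtains C where "C \<in> PC" "C \<noteq> C0"
proof -
  have "PC - {C0} \<noteq> {}"
  proof
    assume "PC - {C0} = {}"
    then have "PC \<subseteq> {C0}" by blast
    then have "card PC \<le> card {C0}" by (intro card_mono) auto
    then have "card PC \<le> 1" by simp
    then show False using cardPCn r2 by simp
  qed
  then show ?thesis using that by blast
qed

lemma path3: assumes x: "x \<in> X" and b: "b \<in> Bs" and nx: "x \<notin> blk b"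
  shows "walk V E (Inl x) (Inr b) 3"
proof -
  obtain C where C: "C \<in> PC" "C \<noteq> pc b" using two_PC[OF pc(1)[OF b]] by blast
  obtain b' where b': "b' \<in> C" "x \<in> blk b'" using blk_ex[OF C(1) x] by blast
  have b'B: "b' \<in> Bs" using b' PC_sub[OF C(1)] by blast
  have "pc b' = C" using pc_eq[OF C(1) b'(1)] .
  then obtain y where y: "y \<in> blk b'" "y \<in> blk b" using common_pt[OF b'B b] C(2) by blast
  have yX: "y \<in> X" using y blkX b by blast
  have w0: "walk V E (Inr b) (Inr b) 0" by (rule walk0) (simp add: b)
  have w1: "walk V E (Inl y) (Inr b) (Suc 0)" by (rule walkS[OF _ _ w0]) (auto simp: yX y)
  have w2: "walk V E (Inr b') (Inr b) (Suc (Suc 0))" by (rule walkS[OF _ _ w1]) (auto simp: b'B y)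
  have w3: "walk V E (Inl x) (Inr b) (Suc (Suc (Suc 0)))" by (rule walkS[OF _ _ w2]) (auto simp: x b')
  then show ?thesis by (simp add: numeral_3_eq_3)
qed

lemma PC_ex: obtains C where "C \<in> PC" using cardPCn r2 by fastforce

lemma walkD: assumes "u \<in> V" "v \<in> V" shows "walk V E u v (D u v)"
proof (cases u)
  case (Inl x)
  then have x: "x \<in> X" using assms by simp
  show ?thesis
  proof (cases v)
    case (Inl y)
    then have y: "y \<in> X" using assms by simp
    show ?thesis
    proof (cases "x = y")
      case True then show ?thesis using Inl \<open>u = Inl x\<close> x by (auto intro: walk0)
    next
      case False
      show ?thesis
      proof (cases "cls x = cls y")
        case True
        obtain C where C: "C \<in> PC" using PC_ex by blast
        obtain b where b: "b \<in> C" "y \<in> blk b" using blk_ex[OF C y] by blast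
        have bB: "b \<in> Bs" using b PC_sub[OF C] by blast
        have "x \<notin> blk b" using blk_nsame[OF bB _ b(2) False] True by blast
        then have "walk V E (Inl x) (Inr b) 3" using path3 x bB by blast
        then have "walk V E (Inl x) (Inl y) (Suc 3)" by (rule walk_snoc) (auto simp: y b)
        then show ?thesis using Inl \<open>u = Inl x\<close> True False by simp
      next
        case c: False
        obtain b where b: "b \<in> Bs" "x \<in> blk b" "y \<in> blk b" using common_blk[OF x y c] by blast
        have w0: "walk V E (Inl y) (Inl y) 0" by (rule walk0) (simp add: y)
        have w1: "walk V E (Inr b) (Inl y) (Suc 0)" by (rule walkS[OF _ _ w0]) (auto simp: b)
        have w2: "walk V E (Inl x) (Inl y) (Suc (Suc 0))" by (rule walkS[OF _ _ w1]) (auto simp: b x)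
        then show ?thesis using Inl \<open>u = Inl x\<close> c False by (simp add: numeral_2_eq_2)
      qed
    qed
  next
    case (Inr b)
    then have b: "b \<in> Bs" using assms by simp
    show ?thesis
    proof (cases "x \<in> blk b")
      case True
      have "walk V E (Inl x) (Inr b) (Suc 0)" by (rule walk_edge) (auto simp: x b True)
      then show ?thesis using Inr \<open>u = Inl x\<close> True by simp
    next
      case False
      then show ?thesis using path3[OF x b False] Inr \<open>u = Inl x\<close> by simp
    qed
  qed
next
  case (Inr a)
  then have a: "a \<in> Bs" using assms by simp
  show ?thesis
  proof (cases v)
    case (Inl y)
    then have y: "y \<in> X" using assms by simp
    have "walk V E (Inl y) (Inr a) (D (Inl y) (Inr a))"
    proof (cases "y \<in> blk a")
      case True
      have "walk V E (Inl y) (Inr a) (Suc 0)" by (rule walk_edge) (auto simp: y a True)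
      then show ?thesis using True by simp
    next
      case False
      then show ?thesis using path3[OF y a False] by simp
    qed
    then have "walk V E (Inr a) (Inl y) (D (Inl y) (Inr a))" by (rule walk_rev[rotated]) (rule inc_E_sym)
    then show ?thesis using Inl Inr by simp
  next
    case (Inr b)
    then have b: "b \<in> Bs" using assms by simp
    show ?thesis
    proof (cases "a = b")
      case True then show ?thesis using Inr \<open>u = Inr a\<close> b by (auto intro: walk0)
    next
      case False
      show ?thesis
      proof (cases "pc a = pc b")
        case True
        have "blk a \<noteq> {}" using cardblk[OF a] r2 by auto
        then obtain x where x: "x \<in> blk a" by blast
        have xX: "x \<in> X" using x blkX a by blast
        have "b \<in> pc a" using pc_iff a b True by blast
        then have "x \<notin> blk b" using disj[OF pc(1)[OF a] pc(2)[OF a] _ False] x by blast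
        then have w3: "walk V E (Inl x) (Inr b) 3" using path3 xX b by blast
        have "walk V E (Inr a) (Inr b) (Suc 3)" by (rule walkS[OF _ _ w3]) (auto simp: a x)
        then show ?thesis using Inr \<open>u = Inr a\<close> True False by simp
      next
        case c: False
        obtain y where y: "y \<in> blk a" "y \<in> blk b" using common_pt[OF a b c] by blast
        have yX: "y \<in> X" using y blkX a by blast
        have w0: "walk V E (Inr b) (Inr b) 0" by (rule walk0) (simp add: b)
        have w1: "walk V E (Inl y) (Inr b) (Suc 0)" by (rule walkS[OF _ _ w0]) (auto simp: y yX)
        have w2: "walk V E (Inr a) (Inr b) (Suc (Suc 0))" by (rule walkS[OF _ _ w1]) (auto simp: y a)
        then show ?thesis using Inr \<open>u = Inr a\<close> c False by (simp add: numeral_2_eq_2)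
      qed
    qed
  qed
qed

lemma D_refl: "D u u = 0" by (cases u) auto

lemma nw0: assumes "walk V E u v 0" "0 < D u v" shows False
proof -
  have "u = v" using walk_0[OF assms(1)] .
  then show False using assms(2) D_refl by simp
qed

lemma nw1: assumes "walk V E u v (Suc 0)" "Suc 0 < D u v" shows False
proof -
  have e: "E u v" using walk_1[OF assms(1)] .
  show False
  proof (cases u)
    case (Inl x)
    then show False using e assms(2) by (cases v) simp_all
  next
    case (Inr a)
    then show False using e assms(2) by (cases v) simp_all
  qed
qed

lemma nw3: assumes "walk V E u v (Suc (Suc (Suc 0)))" "Suc (Suc (Suc 0)) < D u v" shows False
proof -
  have par: "(isl u = isl v) = even (Suc (Suc (Suc 0)))" using walk_parity[OF assms(1)] .
  show False
  proof (cases u)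
    case (Inl x)
    then show False using par assms(2) by (cases v) (simp_all split: if_splits)
  next
    case (Inr a)
    then show False using par assms(2) by (cases v) (simp_all split: if_splits)
  qed
qed

lemma nw2: assumes "walk V E u v (Suc (Suc 0))" "Suc (Suc 0) < D u v" shows False
proof -
  have par: "(isl u = isl v) = even (Suc (Suc 0))" using walk_parity[OF assms(1)] .
  obtain w where w: "w \<in> V" "E u w" "E w v" using walk_2[OF assms(1)] by blast
  have uv: "u \<in> V" "v \<in> V" using walk_V[OF assms(1)] by auto
  show False
  proof (cases u)
    case (Inl x)
    show False
    proof (cases v)
      case (Inl y)
      obtain b where wb: "w = Inr b"
      proof (cases w)
        case (Inl z) then show ?thesis using w(2) \<open>u = Inl x\<close> by simp
      next
        case (Inr c) then show ?thesis using that by simp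
      qed
      have b: "b \<in> Bs" "x \<in> blk b" "y \<in> blk b" using w wb Inl \<open>u = Inl x\<close> by simp_all
      have "x \<noteq> y" "cls x = cls y" using assms(2) Inl \<open>u = Inl x\<close> by (simp_all split: if_splits)
      then show False using blk_nsame[OF b] by simp
    next
      case (Inr b) then show False using par Inl by simp
    qed
  next
    case (Inr a)
    show False
    proof (cases v)
      case (Inl y) then show False using par Inr by simp
    next
      case (Inr b)
      obtain y where wy: "w = Inl y"
      proof (cases w)
        case (Inr z) then show ?thesis using w(2) \<open>u = Inr a\<close> by simp
      next
        case (Inl c) then show ?thesis using that by simp
      qed
      have y: "y \<in> blk a" "y \<in> blk b" using w wy Inr \<open>u = Inr a\<close> by simp_all
      have a: "a \<in> Bs" "b \<in> Bs" using uv Inr \<open>u = Inr a\<close> by simp_all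
      have ne: "a \<noteq> b" "pc a = pc b" using assms(2) Inr \<open>u = Inr a\<close> by (simp_all split: if_splits)
      have "b \<in> pc a" using pc_iff[OF a] ne(2) by simp
      then show False using disj[OF pc(1)[OF a(1)] pc(2)[OF a(1)] _ ne(1)] y by blast
    qed
  qed
qed

lemma nowalk: assumes "walk V E u v n" "n < D u v" shows False
proof -
  have "n < 4" using D_le4[of u v] assms(2) by simp
  then consider "n = 0" | "n = Suc 0" | "n = Suc (Suc 0)" | "n = Suc (Suc (Suc 0))" by linarith
  then show False
  proof cases
    case 1 then show False using nw0 assms by simp
  next
    case 2 then show False using nw1 assms by simp
  next
    case 3 then show False using nw2 assms by simp
  next
    case 4 then show False using nw3 assms by simp
  qed
qed

lemma gd: "u \<in> V \<Longrightarrow> v \<in> V \<Longrightarrow> gdist V E u v = D u v"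
  by (rule gdist_eqI[OF walkD]) (auto intro: nowalk)

end

context rgdl begin

lemma nbrL: "{w\<in>V. E (Inl y) w \<and> Q w} = Inr ` {b\<in>Bs. y \<in> blk b \<and> Q (Inr b)}"
  apply (rule set_eqI)
  subgoal for w by (cases w) auto
  done

lemma nbrR: "b \<in> Bs \<Longrightarrow> {w\<in>V. E (Inr b) w \<and> Q w} = Inl ` {y\<in>blk b. Q (Inl y)}"
  apply (rule set_eqI)
  subgoal for w using blkX by (cases w) auto
  done

lemma cardInl: "card (Inl ` A) = card A" by (simp add: card_image inj_on_def)
lemma cardInr: "card (Inr ` A) = card A" by (simp add: card_image inj_on_def)

definition cf :: "nat \<Rightarrow> nat" where
  "cf i = (if i = 0 then 0 else if i = 1 then 1 else if i = 2 then lam else if i = 3 then r - 1 else r)"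
definition bf :: "nat \<Rightarrow> nat" where
  "bf i = (if i = 0 then r else if i = 1 then r - 1 else if i = 2 then r - lam else if i = 3 then 1 else 0)"

lemma finblk: "b \<in> Bs \<Longrightarrow> finite (blk b)" using blkX finX finite_subset by blast

lemma dr_point: assumes u: "u \<in> V" and y: "y \<in> X"
  shows "card {b\<in>Bs. y \<in> blk b \<and> D u (Inr b) + 1 = D u (Inl y)} = cf (D u (Inl y)) \<and>
         card {b\<in>Bs. y \<in> blk b \<and> D u (Inr b) = D u (Inl y) + 1} = bf (D u (Inl y))"
proof (cases u)
  case (Inl x)
  then have x: "x \<in> X" using u by simp
  show ?thesis
  proof (cases "x = y")
    case True
    have e: "{b\<in>Bs. y \<in> blk b \<and> D u (Inr b) = D u (Inl y) + 1} = {b\<in>Bs. y \<in> blk b}"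
      using Inl True by auto
    show ?thesis unfolding e using Inl True cardNx[OF y] by (simp add: cf_def bf_def)
  next
    case ne: False
    show ?thesis
    proof (cases "cls x = cls y")
      case True
      have e: "{b\<in>Bs. y \<in> blk b \<and> D u (Inr b) + 1 = D u (Inl y)} = {b\<in>Bs. y \<in> blk b}"
        using Inl True ne blk_nsame by fastforce
      show ?thesis unfolding e using Inl True ne cardNx[OF y] by (simp add: cf_def bf_def)
    next
      case False
      have nc: "\<forall>C\<in>P. \<not> (x \<in> C \<and> y \<in> C)" using False cls_eq by metis
      have e1: "{b\<in>Bs. y \<in> blk b \<and> D u (Inr b) + 1 = D u (Inl y)} = {b\<in>Bs. x \<in> blk b \<and> y \<in> blk b}"
        using Inl False ne by auto
      have e2: "{b\<in>Bs. y \<in> blk b \<and> D u (Inr b) = D u (Inl y) + 1} =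
          {b\<in>Bs. y \<in> blk b} - {b\<in>Bs. x \<in> blk b \<and> y \<in> blk b}"
        using Inl False ne by auto
      have c2: "card ({b\<in>Bs. y \<in> blk b} - {b\<in>Bs. x \<in> blk b \<and> y \<in> blk b}) = r - lam"
        using card_Diff_subset[of "{b\<in>Bs. x \<in> blk b \<and> y \<in> blk b}" "{b\<in>Bs. y \<in> blk b}"]
          finBs cardNx[OF y] lamc[OF x y nc] by fastforce
      show ?thesis unfolding e1 e2 c2 using Inl False ne lamc[OF x y nc] by (simp add: cf_def bf_def)
    qed
  qed
next
  case (Inr a)
  then have a: "a \<in> Bs" using u by simp
  show ?thesis
  proof (cases "y \<in> blk a")
    case True
    have e1: "{b\<in>Bs. y \<in> blk b \<and> D u (Inr b) + 1 = D u (Inl y)} = {a}"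
      using Inr True a by auto
    have e2: "{b\<in>Bs. y \<in> blk b \<and> D u (Inr b) = D u (Inl y) + 1} = {b\<in>Bs. y \<in> blk b} - {a}"
    proof -
      have "pc a \<noteq> pc b" if "b \<in> Bs" "y \<in> blk b" "b \<noteq> a" for b
      proof
        assume "pc a = pc b"
        then have "b \<in> pc a" using pc_iff a that(1) by blast
        then show False using disj[OF pc(1)[OF a] pc(2)[OF a] _ that(3)[symmetric]] that(2) True by blast
      qed
      then show ?thesis using Inr True by auto
    qed
    show ?thesis unfolding e1 e2 using Inr True cardNx[OF y] finBs a
      by (simp add: cf_def bf_def)
  next
    case False
    obtain b0 where b0: "b0 \<in> pc a" "y \<in> blk b0" using blk_ex[OF pc(1)[OF a] y] by blast
    have b0B: "b0 \<in> Bs" using b0 PC_sub pc(1)[OF a] by blast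
    have pcb0: "pc b0 = pc a" using pc_eq[OF pc(1)[OF a] b0(1)] .
    have b0a: "b0 \<noteq> a" using b0 False by blast
    have key: "pc a = pc b \<longleftrightarrow> b = b0" if "b \<in> Bs" "y \<in> blk b" for b
    proof
      assume "pc a = pc b"
      then have "b \<in> pc a" using pc_iff a that(1) by blast
      then show "b = b0" using blk_uniq[OF pc(1)[OF a] _ b0(1) that(2) b0(2)] by blast
    qed (use pcb0 in simp)
    have e1: "{b\<in>Bs. y \<in> blk b \<and> D u (Inr b) + 1 = D u (Inl y)} = {b\<in>Bs. y \<in> blk b} - {b0}"
      using Inr False key b0B b0 by auto
    have e2: "{b\<in>Bs. y \<in> blk b \<and> D u (Inr b) = D u (Inl y) + 1} = {b0}"
      using Inr False key b0B b0 b0a by auto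
    show ?thesis unfolding e1 e2 using Inr False cardNx[OF y] finBs b0B b0
      by (simp add: cf_def bf_def)
  qed
qed

lemma dr_block: assumes u: "u \<in> V" and b: "b \<in> Bs"
  shows "card {y\<in>blk b. D u (Inl y) + 1 = D u (Inr b)} = cf (D u (Inr b)) \<and>
         card {y\<in>blk b. D u (Inl y) = D u (Inr b) + 1} = bf (D u (Inr b))"
proof (cases u)
  case (Inl x)
  then have x: "x \<in> X" using u by simp
  show ?thesis
  proof (cases "x \<in> blk b")
    case True
    have e1: "{y\<in>blk b. D u (Inl y) + 1 = D u (Inr b)} = {x}" using Inl True by auto
    have e2: "{y\<in>blk b. D u (Inl y) = D u (Inr b) + 1} = blk b - {x}"
      using Inl True blk_nsame[OF b True] by auto
    show ?thesis unfolding e1 e2 using Inl True cardblk[OF b] finblk[OF b]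
      by (simp add: cf_def bf_def)
  next
    case False
    have e1: "{y\<in>blk b. D u (Inl y) + 1 = D u (Inr b)} = blk b - cls x"
      using Inl False cls_iff[OF x] blkX[OF b] by auto
    have e2: "{y\<in>blk b. D u (Inl y) = D u (Inr b) + 1} = blk b \<inter> cls x"
      using Inl False cls_iff[OF x] blkX[OF b] by auto
    have "card (blk b - cls x) = r - 1"
      using card_Diff_subset_Int[of "blk b" "cls x"] finblk[OF b] cardblk[OF b] meet1[OF b cls(1)[OF x]] by simp
    then show ?thesis unfolding e1 e2 using Inl False meet1[OF b cls(1)[OF x]]
      by (simp add: cf_def bf_def)
  qed
next
  case (Inr a)
  then have a: "a \<in> Bs" using u by simp
  show ?thesis
  proof (cases "a = b")
    case True
    have e2: "{y\<in>blk b. D u (Inl y) = D u (Inr b) + 1} = blk b" using Inr True by auto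
    show ?thesis unfolding e2 using Inr True cardblk[OF b] by (simp add: cf_def bf_def)
  next
    case ne: False
    show ?thesis
    proof (cases "pc a = pc b")
      case True
      have "b \<in> pc a" using pc_iff a b True by blast
      then have dj: "blk a \<inter> blk b = {}" using disj[OF pc(1)[OF a] pc(2)[OF a] _ ne] by blast
      have e1: "{y\<in>blk b. D u (Inl y) + 1 = D u (Inr b)} = blk b" using Inr True ne dj by auto
      show ?thesis unfolding e1 using Inr True ne cardblk[OF b] by (simp add: cf_def bf_def)
    next
      case False
      have e1: "{y\<in>blk b. D u (Inl y) + 1 = D u (Inr b)} = blk b \<inter> blk a" using Inr False ne by auto
      have e2: "{y\<in>blk b. D u (Inl y) = D u (Inr b) + 1} = blk b - blk a" using Inr False ne by auto
      have c1: "card (blk b \<inter> blk a) = lam" using interlam[OF a b False] by (simp add: Int_commute)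
      have "card (blk b - blk a) = r - lam"
        using card_Diff_subset_Int[of "blk b" "blk a"] finblk[OF b] cardblk[OF b] c1 by simp
      then show ?thesis unfolding e1 e2 using Inr False ne c1 by (simp add: cf_def bf_def)
    qed
  qed
qed

lemma finV: "finite V" unfolding inc_V_def using finX finBs by simp

lemma conn: "gconnected V E" unfolding gconnected_def using walkD by blast

lemma DR: "distance_regular V E"
  unfolding distance_regular_def
proof (intro conjI finV conn exI ballI)
  fix u v assume u: "u \<in> V" and v: "v \<in> V"
  have s1: "{w\<in>V. E v w \<and> gdist V E u w + 1 = gdist V E u v} = {w\<in>V. E v w \<and> D u w + 1 = D u v}"
    using gd u v by auto
  have s2: "{w\<in>V. E v w \<and> gdist V E u w = gdist V E u v + 1} = {w\<in>V. E v w \<and> D u w = D u v + 1}"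
    using gd u v by auto
  have "card {w\<in>V. E v w \<and> D u w + 1 = D u v} = cf (D u v) \<and>
        card {w\<in>V. E v w \<and> D u w = D u v + 1} = bf (D u v)"
  proof (cases v)
    case (Inl y)
    then show ?thesis using dr_point[OF u, of y] v by (simp add: nbrL cardInr)
  next
    case (Inr b)
    then show ?thesis using dr_block[OF u, of b] v by (simp add: nbrR cardInl)
  qed
  then show "card {w\<in>V. E v w \<and> gdist V E u w + 1 = gdist V E u v} = cf (gdist V E u v)"
     "card {w\<in>V. E v w \<and> gdist V E u w = gdist V E u v + 1} = bf (gdist V E u v)"
    unfolding s1 s2 using gd u v by auto
qed

lemma BIP: "bipartite V E"
  unfolding bipartite_def
  apply (rule exI[of _ "Inl ` X"], rule exI[of _ "Inr ` Bs"])
  apply (intro conjI)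
    apply blast
   apply (simp add: inc_V_def)
  apply (intro ballI impI)
  subgoal for u v by (cases u; cases v) (auto simp: inc_V_def)
  done

end

context rgdl begin

definition key :: "('a + 'b) \<Rightarrow> ('a set + 'b set)" where
  "key u = (case u of Inl x \<Rightarrow> Inl (cls x) | Inr b \<Rightarrow> Inr (pc b))"

lemma D04: "(D u v = 0 \<or> D u v = 4) \<longleftrightarrow> key u = key v"
  by (cases u; cases v) (auto simp: key_def)

lemma antirel_eq: "antirel V E 4 = {(u, v). u \<in> V \<and> v \<in> V \<and> key u = key v}"
  unfolding antirel_def using gd by (auto simp: D04[symmetric])

lemma equivR: "equiv V (antirel V E 4)"
  unfolding antirel_eq equiv_def refl_on_def sym_def trans_def by auto

lemma classL: assumes x: "x \<in> X" shows "antirel V E 4 `` {Inl x} = Inl ` cls x"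
proof (rule set_eqI)
  fix v show "v \<in> antirel V E 4 `` {Inl x} \<longleftrightarrow> v \<in> Inl ` cls x"
  proof (cases v)
    case (Inl y)
    have "y \<in> cls x \<Longrightarrow> y \<in> X" using P_sub[OF cls(1)[OF x]] by blast
    then show ?thesis using Inl x cls_iff[OF x, of y] by (auto simp: antirel_eq key_def)
  next
    case (Inr b) then show ?thesis by (auto simp: antirel_eq key_def)
  qed
qed

lemma classR: assumes b: "b \<in> Bs" shows "antirel V E 4 `` {Inr b} = Inr ` pc b"
proof (rule set_eqI)
  fix v show "v \<in> antirel V E 4 `` {Inr b} \<longleftrightarrow> v \<in> Inr ` pc b"
  proof (cases v)
    case (Inr a)
    have "a \<in> pc b \<Longrightarrow> a \<in> Bs" using PC_sub[OF pc(1)[OF b]] by blast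
    then show ?thesis using Inr b pc_iff[OF b, of a] by (auto simp: antirel_eq key_def)
  next
    case (Inl y) then show ?thesis by (auto simp: antirel_eq key_def)
  qed
qed

abbreviation "S1 \<equiv> (\<lambda>C. Inl ` C) ` P"
abbreviation "S2 \<equiv> (\<lambda>C. Inr ` C) ` PC"

lemma blocks: "antipodal_blocks V E 4 = S1 \<union> S2"
proof
  show "antipodal_blocks V E 4 \<subseteq> S1 \<union> S2"
  proof
    fix A assume "A \<in> antipodal_blocks V E 4"
    then obtain u where u: "u \<in> V" "A = antirel V E 4 `` {u}"
      unfolding antipodal_blocks_def quotient_def by blast
    show "A \<in> S1 \<union> S2"
    proof (cases u)
      case (Inl x)
      then have x: "x \<in> X" using u by simp
      then show ?thesis using u Inl classL[OF x] cls(1)[OF x] by auto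
    next
      case (Inr b)
      then have b: "b \<in> Bs" using u by simp
      then show ?thesis using u Inr classR[OF b] pc(1)[OF b] by auto
    qed
  qed
  show "S1 \<union> S2 \<subseteq> antipodal_blocks V E 4"
  proof
    fix A assume "A \<in> S1 \<union> S2"
    then show "A \<in> antipodal_blocks V E 4"
    proof
      assume "A \<in> S1"
      then obtain C where C: "C \<in> P" "A = Inl ` C" by blast
      obtain x where x: "x \<in> C" using P_ne[OF C(1)] by blast
      have xX: "x \<in> X" using x P_sub[OF C(1)] by blast
      have "A = antirel V E 4 `` {Inl x}" using classL[OF xX] cls_eq[OF C(1) x] C(2) by simp
      then show ?thesis unfolding antipodal_blocks_def quotient_def using xX by auto
    next
      assume "A \<in> S2"
      then obtain C where C: "C \<in> PC" "A = Inr ` C" by blast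
      obtain b where b: "b \<in> C" using PC_ne[OF C(1)] by blast
      have bB: "b \<in> Bs" using b PC_sub[OF C(1)] by blast
      have "A = antirel V E 4 `` {Inr b}" using classR[OF bB] pc_eq[OF C(1) b] C(2) by simp
      then show ?thesis unfolding antipodal_blocks_def quotient_def using bB by auto
    qed
  qed
qed

lemma Inl_ne_Inr: assumes "C \<noteq> {}" shows "Inl ` C \<noteq> Inr ` C'"
proof
  assume e: "Inl ` C = Inr ` C'"
  obtain x where "x \<in> C" using assms by blast
  then have "Inl x \<in> Inr ` C'" using e by blast
  then show False by blast
qed

lemma Inr_ne_Inl: assumes "C \<noteq> {}" shows "Inr ` C \<noteq> Inl ` C'"
proof
  assume e: "Inr ` C = Inl ` C'"
  obtain x where "x \<in> C" using assms by blast
  then have "Inr x \<in> Inl ` C'" using e by blast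
  then show False by blast
qed

lemma notS2: assumes "C \<in> P" shows "Inl ` C \<notin> S2"
proof -
  have "\<forall>x\<in>PC. Inl ` C \<noteq> Inr ` x"
  proof (intro ballI)
    fix x show "Inl ` C \<noteq> Inr ` x" by (rule Inl_ne_Inr[OF P_ne[OF assms]])
  qed
  then show ?thesis by (simp add: image_iff)
qed

lemma notS1: assumes "C \<in> PC" shows "Inr ` C \<notin> S1"
proof -
  have "\<forall>x\<in>P. Inr ` C \<noteq> Inl ` x"
  proof (intro ballI)
    fix x show "Inr ` C \<noteq> Inl ` x" by (rule Inr_ne_Inl[OF PC_ne[OF assms]])
  qed
  then show ?thesis by (simp add: image_iff)
qed

lemma qLL: "\<not> qadj E (Inl ` C) (Inl ` C')"
proof
  assume "qadj E (Inl ` C) (Inl ` C')"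
  then have "\<exists>x\<in>Inl ` C. \<exists>y\<in>Inl ` C'. E x y" unfolding qadj_def by (rule conjunct2)
  then obtain x y where xy: "x \<in> Inl ` C" "y \<in> Inl ` C'" "E x y" by blast
  then obtain a c where "x = Inl a" "y = Inl c" by blast
  then show False using xy(3) by simp
qed

lemma qRR: "\<not> qadj E (Inr ` C) (Inr ` C')"
proof
  assume "qadj E (Inr ` C) (Inr ` C')"
  then have "\<exists>x\<in>Inr ` C. \<exists>y\<in>Inr ` C'. E x y" unfolding qadj_def by (rule conjunct2)
  then obtain x y where xy: "x \<in> Inr ` C" "y \<in> Inr ` C'" "E x y" by blast
  then obtain a c where "x = Inr a" "y = Inr c" by blast
  then show False using xy(3) by simp
qed

lemma qLR: assumes "C \<in> P" "C' \<in> PC" shows "qadj E (Inl ` C) (Inr ` C')"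
proof -
  obtain x where x: "x \<in> C" using P_ne[OF assms(1)] by blast
  have xX: "x \<in> X" using x P_sub[OF assms(1)] by blast
  obtain b where b: "b \<in> C'" "x \<in> blk b" using blk_ex[OF assms(2) xX] by blast
  have ex: "\<exists>u\<in>Inl ` C. \<exists>v\<in>Inr ` C'. E u v"
  proof (rule bexI[of _ "Inl x"], rule bexI[of _ "Inr b"])
    show "E (Inl x) (Inr b)" using b(2) by simp
    show "Inr b \<in> Inr ` C'" using b(1) by (rule imageI)
    show "Inl x \<in> Inl ` C" using x by (rule imageI)
  qed
  show ?thesis unfolding qadj_def using Inl_ne_Inr[OF P_ne[OF assms(1)]] ex by (rule conjI)
qed

lemma qRL: assumes "C \<in> PC" "C' \<in> P" shows "qadj E (Inr ` C) (Inl ` C')"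
proof -
  obtain x where x: "x \<in> C'" using P_ne[OF assms(2)] by blast
  have xX: "x \<in> X" using x P_sub[OF assms(2)] by blast
  obtain b where b: "b \<in> C" "x \<in> blk b" using blk_ex[OF assms(1) xX] by blast
  have ex: "\<exists>u\<in>Inr ` C. \<exists>v\<in>Inl ` C'. E u v"
  proof (rule bexI[of _ "Inr b"], rule bexI[of _ "Inl x"])
    show "E (Inr b) (Inl x)" using b(2) by simp
    show "Inl x \<in> Inl ` C'" using x by (rule imageI)
    show "Inr b \<in> Inr ` C" using b(1) by (rule imageI)
  qed
  show ?thesis unfolding qadj_def using Inr_ne_Inl[OF PC_ne[OF assms(1)]] ex by (rule conjI)
qed

lemma injL: "inj_on (\<lambda>C. Inl ` C) P"
proof (rule inj_onI)
  fix A B assume "Inl ` A = Inl ` B" then show "A = B" by (rule iffD1[OF inj_image_eq_iff[OF inj_Inl]])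
qed
lemma injR: "inj_on (\<lambda>C. Inr ` C) PC"
proof (rule inj_onI)
  fix A B assume "Inr ` A = Inr ` B" then show "A = B" by (rule iffD1[OF inj_image_eq_iff[OF inj_Inr]])
qed

lemma Krr: "quotient_is_Krr V E 4 r"
  unfolding quotient_is_Krr_def blocks
proof (intro exI conjI)
  show "S1 \<inter> S2 = {}"
  proof (rule equals0I)
    fix A assume A: "A \<in> S1 \<inter> S2"
    then obtain C where C: "C \<in> P" "A = Inl ` C" by blast
    show False using notS2[OF C(1)] A C(2) by simp
  qed
  show "S1 \<union> S2 = S1 \<union> S2" ..
  show "card S1 = r" using card_image[OF injL] cardPn by simp
  show "card S2 = r" using card_image[OF injR] cardPCn by simp
  show "\<forall>A\<in>S1 \<union> S2. \<forall>A'\<in>S1 \<union> S2. qadj E A A' = (A \<in> S1 \<and> A' \<in> S2 \<or> A \<in> S2 \<and> A' \<in> S1)"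
  proof (intro ballI)
    fix A A' assume A: "A \<in> S1 \<union> S2" and A': "A' \<in> S1 \<union> S2"
    show "qadj E A A' = (A \<in> S1 \<and> A' \<in> S2 \<or> A \<in> S2 \<and> A' \<in> S1)"
    proof (cases "A \<in> S1")
      case True
      then obtain C where C: "C \<in> P" "A = Inl ` C" by blast
      have nA: "A \<notin> S2" using notS2[OF C(1)] C(2) by simp
      show ?thesis
      proof (cases "A' \<in> S1")
        case True
        then obtain C' where C': "C' \<in> P" "A' = Inl ` C'" by blast
        have "A' \<notin> S2" using notS2[OF C'(1)] C'(2) by simp
        have "\<not> qadj E A A'" using qLL C(2) C'(2) by simp
        then show ?thesis using nA \<open>A' \<notin> S2\<close> by simp
      next
        case False
        then have "A' \<in> S2" using A' by blast
        then obtain C' where C': "C' \<in> PC" "A' = Inr ` C'" by blast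
        have "qadj E A A'" using qLR[OF C(1) C'(1)] C(2) C'(2) by simp
        then show ?thesis using True \<open>A' \<in> S2\<close> by simp
      qed
    next
      case False
      then have AS2: "A \<in> S2" using A by blast
      then obtain C where C: "C \<in> PC" "A = Inr ` C" by blast
      show ?thesis
      proof (cases "A' \<in> S1")
        case True
        then obtain C' where C': "C' \<in> P" "A' = Inl ` C'" by blast
        have "qadj E A A'" using qRL[OF C(1) C'(1)] C(2) C'(2) by simp
        then show ?thesis using True AS2 by simp
      next
        case False
        then have "A' \<in> S2" using A' by blast
        then obtain C' where C': "C' \<in> PC" "A' = Inr ` C'" by blast
        have "\<not> qadj E A A'" using qRR C(2) C'(2) by simp
        then show ?thesis using False \<open>A \<notin> S1\<close> by simp
      qed
    qed
  qed
qed

lemma cover: "is_cover_of_quotient V E 4"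
  unfolding is_cover_of_quotient_def blocks
proof (intro ballI impI)
  fix A A' u assume A: "A \<in> S1 \<union> S2" and A': "A' \<in> S1 \<union> S2" and q: "qadj E A A'" and u: "u \<in> A"
  show "\<exists>!y. y \<in> A' \<and> E u y"
  proof (cases "A \<in> S1")
    case True
    then obtain C where C: "C \<in> P" "A = Inl ` C" by blast
    have "A' \<notin> S1"
    proof
      assume "A' \<in> S1"
      then obtain C' where "A' = Inl ` C'" by blast
      then show False using q qLL C(2) by simp
    qed
    then obtain C' where C': "C' \<in> PC" "A' = Inr ` C'" using A' by blast
    obtain x where x: "x \<in> C" "u = Inl x" using u C(2) by blast
    have xX: "x \<in> X" using x P_sub[OF C(1)] by blast
    obtain b where b: "b \<in> C'" "x \<in> blk b" using blk_ex[OF C'(1) xX] by blast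
    show ?thesis
    proof (rule ex1I[of _ "Inr b"])
      show "Inr b \<in> A' \<and> E u (Inr b)" using b C'(2) x(2) by simp
      fix y assume y: "y \<in> A' \<and> E u y"
      then obtain b' where b': "b' \<in> C'" "y = Inr b'" using C'(2) by blast
      have "x \<in> blk b'" using y b' x(2) by simp
      then show "y = Inr b" using blk_uniq[OF C'(1) b'(1) b(1) _ b(2)] b'(2) by simp
    qed
  next
    case False
    then have "A \<in> S2" using A by blast
    then obtain C where C: "C \<in> PC" "A = Inr ` C" by blast
    have "A' \<notin> S2"
    proof
      assume "A' \<in> S2"
      then obtain C' where "A' = Inr ` C'" by blast
      then show False using q qRR C(2) by simp
    qed
    then obtain C' where C': "C' \<in> P" "A' = Inl ` C'" using A' by blast
    obtain b where b: "b \<in> C" "u = Inr b" using u C(2) by blast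
    have bB: "b \<in> Bs" using b PC_sub[OF C(1)] by blast
    obtain y0 where y0: "y0 \<in> blk b" "y0 \<in> C'" and un: "\<And>z. z \<in> blk b \<and> z \<in> C' \<Longrightarrow> z = y0"
      using pt_ex1[OF bB C'(1)] by blast
    show ?thesis
    proof (rule ex1I[of _ "Inl y0"])
      show "Inl y0 \<in> A' \<and> E u (Inl y0)" using y0 C'(2) b(2) by simp
      fix y assume y: "y \<in> A' \<and> E u y"
      then obtain z where z: "z \<in> C'" "y = Inl z" using C'(2) by blast
      have "z \<in> blk b" using y z b(2) by simp
      then show "y = Inl y0" using un z by simp
    qed
  qed
qed

lemma cards: "\<forall>A\<in>antipodal_blocks V E 4. card A = m"
  unfolding blocks using cardP cardPC by (auto simp: cardInl cardInr)

lemma diam: "has_diameter V E 4"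
  unfolding has_diameter_def
proof (intro conjI conn ballI)
  fix u v assume "u \<in> V" "v \<in> V"
  then show "gdist V E u v \<le> 4" using gd D_le4 by simp
next
  obtain C where C: "C \<in> P" using cardPn r2 by fastforce
  obtain x where x: "x \<in> C" using P_ne[OF C] by blast
  have fC: "finite C" using P_sub[OF C] finX finite_subset by blast
  have "card (C - {x}) = m - 1" using card_Diff_singleton[OF x] cardP[OF C] by simp
  then have cne: "card (C - {x}) \<noteq> 0" using m2 by simp
  have "C - {x} \<noteq> {}"
  proof
    assume e: "C - {x} = {}" show False using cne unfolding e by simp
  qed
  then obtain y where y: "y \<in> C" "y \<noteq> x" by blast
  have xX: "x \<in> X" "y \<in> X" using x y P_sub[OF C] by auto
  have "gdist V E (Inl x) (Inl y) = 4" using gd[of "Inl x" "Inl y"] xX y cls_eq[OF C x] cls_eq[OF C y(1)] by simp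
  then show "\<exists>u\<in>V. \<exists>v\<in>V. gdist V E u v = 4" using xX by force
qed

end

theorem lemma2p2:
  fixes X :: "'a set" and P :: "'a set set" and Bs :: "'b set" and blk :: "'b \<Rightarrow> 'a set"
    and PC :: "'b set set" and r lam m :: nat
  assumes "RGD r lam m X P Bs blk PC"
    and "r = lam * m"
    and "lam \<ge> 1" and "m \<ge> 2"
    and "\<forall>C1\<in>PC. \<forall>C2\<in>PC. C1 \<noteq> C2 \<longrightarrow>
           (\<forall>b1\<in>C1. \<forall>b2\<in>C2. card (blk b1 \<inter> blk b2) = lam)"
  shows "distance_regular (inc_V X Bs) (inc_E blk) \<and> bipartite (inc_V X Bs) (inc_E blk) \<and>
         antipodal_cover_Krr (inc_V X Bs) (inc_E blk) r 4 m"
proof -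
  interpret rgdl X P Bs blk PC r lam m
    by (rule rgdl.intro) (rule assms)+
  show ?thesis
    unfolding antipodal_cover_Krr_def antipodal_def
    by (intro conjI DR BIP diam equivR cover Krr cards)
qed

end
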